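(* Let $\omega$ be an attack cycle. For $k\ge 0$, the probability that $\omega$ is won by the attacker and $L(\omega)=k$ equals $\pi_k$. For $k\ge 2$, the probability that $\omega$ is won by the attacker and $L(\omega)\le k$ equals $pq^2+pq^2C_{k-2}(pq)$.
   Context: Honest hashrate $p$, attacker hashrate $q$, $p+q=1$, $0<q<p$. Attack cycles are words in S (attacker block) and H (honest block): H, SHS, SHH, or SSwH with $w$ a Dyck word over $\{S,H\}$ (S up-step, H down-step); with $|w|$ half the length of $w$: $\mathbb{P}[H]=p$, $\mathbb{P}[SHS]=pq^2$, $\mathbb{P}[SHH]=p^2q$, $\mathbb{P}[SSwH]=q^2p(pq)^{|w|}$. $L(\omega)$ is the number of blocks added to the official chain: $L(H)=1$, $L(SHS)=L(SHH)=2$, $L(SSwH)=|w|+2$. The cycle is won by the attacker if $\omega=SHS$ or $\omega$ starts with SS. $C_n=\frac{(2n)!}{n!(n+1)!}$ is the $n$-th Catalan number and $C_n(x)=\sum_{k=0}^nC_kx^k$. Set $\pi_0=\pi_1=0$ and for $k\ge2$, $\pi_k=pq^2\bigl(\mathbf 1_{k=2}+(pq)^{k-2}C_{k-2}\bigr)$. *)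

theory Defs
  imports "HOL-Analysis.Analysis"
begin

datatype blk = S | H

definition nS :: "blk list \<Rightarrow> nat" where "nS w = length (filter (\<lambda>b. b = S) w)"
definition nH :: "blk list \<Rightarrow> nat" where "nH w = length (filter (\<lambda>b. b = H) w)"

definition dyck :: "blk list \<Rightarrow> bool" where
  "dyck w \<longleftrightarrow> (\<forall>i \<le> length w. nH (take i w) \<le> nS (take i w)) \<and> nS w = nH w"

definition half :: "blk list \<Rightarrow> nat" where "half w = length w div 2"

definition attack_cycles :: "blk list set" where
  "attack_cycles = {[H], [S,H,S], [S,H,H]} \<union> {[S,S] @ w @ [H] | w. dyck w}"

text \<open>Probability of a cycle; for SSwH, the Dyck word w is recovered as drop 2 (butlast \<omega>).\<close>
definition cyc_prob :: "real \<Rightarrow> real \<Rightarrow> blk list \<Rightarrow> real" where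
  "cyc_prob p q \<omega> =
     (if \<omega> = [H] then p
      else if \<omega> = [S,H,S] then p * q^2
      else if \<omega> = [S,H,H] then p^2 * q
      else q^2 * p * (p*q) ^ half (drop 2 (butlast \<omega>)))"

definition L :: "blk list \<Rightarrow> nat" where
  "L \<omega> = (if \<omega> = [H] then 1
          else if \<omega> = [S,H,S] \<or> \<omega> = [S,H,H] then 2
          else half (drop 2 (butlast \<omega>)) + 2)"

definition won :: "blk list \<Rightarrow> bool" where
  "won \<omega> \<longleftrightarrow> \<omega> = [S,H,S] \<or> take 2 \<omega> = [S,S]"

definition cyc_event_prob :: "real \<Rightarrow> real \<Rightarrow> (blk list \<Rightarrow> bool) \<Rightarrow> real" where
  "cyc_event_prob p q E = infsum (cyc_prob p q) {\<omega> \<in> attack_cycles. E \<omega>}"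

definition catalan :: "nat \<Rightarrow> real" where
  "catalan n = fact (2*n) / (fact n * fact (n+1))"

definition catalan_poly :: "nat \<Rightarrow> real \<Rightarrow> real" where
  "catalan_poly n x = (\<Sum>k=0..n. catalan k * x^k)"

definition pi_k :: "real \<Rightarrow> real \<Rightarrow> nat \<Rightarrow> real" where
  "pi_k p q k = (if k < 2 then 0
     else p * q^2 * ((if k = 2 then 1 else 0) + (p*q)^(k-2) * catalan (k-2)))"

end

theory Submission
  imports Defs
begin


definition ok :: "blk list \<Rightarrow> bool" where
  "ok w \<longleftrightarrow> (\<forall>i \<le> length w. nH (take i w) \<le> nS (take i w))"

definition W :: "nat \<Rightarrow> nat \<Rightarrow> blk list set" where
  "W a b = {w. ok w \<and> nS w = a \<and> nH w = b}"

lemma nS_simps[simp]: "nS [] = 0" "nS (x # w) = (if x = S then Suc (nS w) else nS w)"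
  "nS (w @ v) = nS w + nS v"
  by (auto simp: nS_def)
lemma nH_simps[simp]: "nH [] = 0" "nH (x # w) = (if x = H then Suc (nH w) else nH w)"
  "nH (w @ v) = nH w + nH v"
  by (auto simp: nH_def)

lemma len_nSH: "length w = nS w + nH w"
proof (induction w)
  case (Cons x w) then show ?case by (cases x) auto
qed simp

lemma ok_Nil[simp]: "ok []" by (simp add: ok_def)

lemma ok_snoc: "ok (w @ [x]) \<longleftrightarrow> ok w \<and> nH (w @ [x]) \<le> nS (w @ [x])"
proof
  assume a: "ok (w @ [x])"
  have "ok w" unfolding ok_def
  proof (intro allI impI)
    fix i assume "i \<le> length w"
    then have "take i (w @ [x]) = take i w" by simp
    with a \<open>i \<le> length w\<close> show "nH (take i w) \<le> nS (take i w)" unfolding ok_def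
      by (metis le_SucI length_append_singleton)
  qed
  moreover have "nH (w @ [x]) \<le> nS (w @ [x])" using a unfolding ok_def
    by (metis order_refl take_all)
  ultimately show "ok w \<and> nH (w @ [x]) \<le> nS (w @ [x])" by blast
next
  assume a: "ok w \<and> nH (w @ [x]) \<le> nS (w @ [x])"
  show "ok (w @ [x])" unfolding ok_def
  proof (intro allI impI)
    fix i assume i: "i \<le> length (w @ [x])"
    show "nH (take i (w @ [x])) \<le> nS (take i (w @ [x]))"
    proof (cases "i \<le> length w")
      case True
      then show ?thesis using a unfolding ok_def by simp
    next
      case False
      then have "i = length (w @ [x])" using i by simp
      then show ?thesis using a by simp
    qed
  qed
qed

lemma ok_le: "ok w \<Longrightarrow> nH w \<le> nS w"
  unfolding ok_def by (metis order_refl take_all)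

lemma blk_UNIV: "set w \<subseteq> {S, H}"
  by (auto intro: blk.exhaust)

lemma finite_W: "finite (W a b)"
proof -
  have "W a b \<subseteq> {w. set w \<subseteq> {S,H} \<and> length w = a + b}"
    unfolding W_def using len_nSH blk_UNIV by auto
  then show ?thesis using finite_lists_length_eq[of "{S,H}" "a+b"] finite_subset by auto
qed

lemma W_0_0: "W 0 0 = {[]}"
  unfolding W_def by auto (metis add.right_neutral len_nSH length_0_conv)

lemma W_Suc_0: "W (Suc a) 0 = (\<lambda>w. w @ [S]) ` W a 0"
proof (intro set_eqI iffI)
  fix w assume "w \<in> W (Suc a) 0"
  then have w: "ok w" "nS w = Suc a" "nH w = 0" by (auto simp: W_def)
  then have "w \<noteq> []" by auto
  then obtain v x where v: "w = v @ [x]" by (metis rev_exhaust)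
  show "w \<in> (\<lambda>w. w @ [S]) ` W a 0"
  proof (cases x)
    case S then show ?thesis using w v ok_snoc by (auto simp: W_def)
  next
    case H then show ?thesis using w v by auto
  qed
next
  fix w assume "w \<in> (\<lambda>w. w @ [S]) ` W a 0"
  then show "w \<in> W (Suc a) 0" by (auto simp: W_def ok_snoc)
qed

lemma W_0_Suc: "W 0 (Suc b) = {}"
  unfolding W_def ok_def by (auto dest: spec[of _ "length _"])

lemma W_gt: "b > a \<Longrightarrow> W a b = {}"
  unfolding W_def ok_def by (auto dest: spec[of _ "length _"])

lemma W_Suc_Suc: "W (Suc a) (Suc b) = (\<lambda>w. w @ [S]) ` W a (Suc b) \<union>
    (if b \<le> a then (\<lambda>w. w @ [H]) ` W (Suc a) b else {})"
proof (intro set_eqI iffI)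
  fix w assume "w \<in> W (Suc a) (Suc b)"
  then have w: "ok w" "nS w = Suc a" "nH w = Suc b" by (auto simp: W_def)
  then have "w \<noteq> []" by auto
  then obtain v x where v: "w = v @ [x]" by (metis rev_exhaust)
  have "b \<le> a" using w unfolding ok_def by (metis Suc_le_mono order_refl take_all)
  show "w \<in> (\<lambda>w. w @ [S]) ` W a (Suc b) \<union>
    (if b \<le> a then (\<lambda>w. w @ [H]) ` W (Suc a) b else {})"
  proof (cases x)
    case S then show ?thesis using w v ok_snoc by (auto simp: W_def)
  next
    case H then show ?thesis using w v ok_snoc \<open>b \<le> a\<close> by (auto simp: W_def)
  qed
next
  fix w assume "w \<in> (\<lambda>w. w @ [S]) ` W a (Suc b) \<union>
    (if b \<le> a then (\<lambda>w. w @ [H]) ` W (Suc a) b else {})"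
  then show "w \<in> W (Suc a) (Suc b)" by (auto simp: W_def ok_snoc dest: ok_le split: if_splits)
qed

fun g :: "nat \<Rightarrow> nat \<Rightarrow> nat" where
  "g 0 0 = 1"
| "g (Suc a) 0 = g a 0"
| "g 0 (Suc b) = 0"
| "g (Suc a) (Suc b) = g a (Suc b) + (if b \<le> a then g (Suc a) b else 0)"

lemma card_W: "card (W a b) = g a b"
proof (induction a b rule: g.induct)
  case 1 then show ?case by (simp add: W_0_0)
next
  case (2 a) then show ?case by (simp add: W_Suc_0 card_image inj_on_def)
next
  case (3 b) then show ?case by (simp add: W_0_Suc)
next
  case (4 a b)
  have d: "(\<lambda>w. w @ [S]) ` W a (Suc b) \<inter> (\<lambda>w. w @ [H]) ` W (Suc a) b = {}" by auto
  show ?case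
    using 4 d by (simp add: W_Suc_Suc card_Un_disjoint finite_W card_image inj_on_def)
qed

lemma g_gt: "b > a \<Longrightarrow> g a b = 0"
  by (induction a b rule: g.induct) auto

lemma g_closed: "b \<le> Suc a \<Longrightarrow>
  int (g a b) = int (a + b choose b) - (if b = 0 then 0 else int (a + b choose (b - 1)))"
proof (induction a b rule: g.induct)
  case 1 then show ?case by simp
next
  case (2 a) then show ?case by simp
next
  case (3 b) then show ?case by simp
next
  case (4 a b)
  show ?case
  proof (cases "b \<le> a")
    case True
    have IH1: "int (g a (Suc b)) = int (a + Suc b choose Suc b) - int (a + Suc b choose b)"
      using 4(1) True by simp
    have IH2: "int (g (Suc a) b) = int (Suc a + b choose b) - (if b = 0 then 0 else int (Suc a + b choose (b - 1)))"
      using 4(2) True by simp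
    have P1: "Suc a + Suc b choose Suc b = (a + Suc b choose Suc b) + (a + Suc b choose b)"
      by simp
    have P2: "b \<noteq> 0 \<Longrightarrow> Suc a + Suc b choose b = (Suc a + b choose b) + (Suc a + b choose (b - 1))"
      by (cases b) auto
    show ?thesis using IH1 IH2 P1 P2 True by (cases "b = 0") auto
  next
    case False
    then have b: "b = Suc a" using 4(3) by simp
    have "g a (Suc b) = 0" using b g_gt by simp
    moreover have "(Suc a + Suc b choose Suc b) = (Suc a + Suc b choose b)"
      using b binomial_symmetric[of b "Suc a + Suc b"] by simp
    ultimately show ?thesis using False by simp
  qed
qed

lemma alg_cat: "\<And>F a x::real. a > 0 \<Longrightarrow> x > 0 \<Longrightarrow>
       F / ((x*a) * (x*a)) - F / (a * ((1+x) * (x*a))) = F / ((x*a) * ((1+x) * (x*a)))"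
proof -
  fix F a x :: real assume h: "a > 0" "x > 0"
  define D where "D = (x*a) * ((1+x) * (x*a))"
  have "F / ((x*a) * (x*a)) = ((1+x) * F) / ((1+x) * ((x*a) * (x*a)))"
    using h by (subst mult_divide_mult_cancel_left) auto
  also have "(1+x) * ((x*a) * (x*a)) = D" unfolding D_def by (simp add: algebra_simps)
  finally have 1: "F / ((x*a) * (x*a)) = ((1+x) * F) / D" .
  have "F / (a * ((1+x) * (x*a))) = (x * F) / (x * (a * ((1+x) * (x*a))))"
    using h by (subst mult_divide_mult_cancel_left) auto
  also have "x * (a * ((1+x) * (x*a))) = D" unfolding D_def by (simp add: algebra_simps)
  finally have 2: "F / (a * ((1+x) * (x*a))) = (x * F) / D" .
  show "F / ((x*a) * (x*a)) - F / (a * ((1+x) * (x*a))) = F / ((x*a) * ((1+x) * (x*a)))"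
    unfolding 1 2 D_def[symmetric] by (simp add: diff_divide_distrib[symmetric] algebra_simps)
qed

lemma catalan_g: "catalan n = real (g n n)"
proof (cases "n = 0")
  case True then show ?thesis by (simp add: catalan_def)
next
  case False
  define m where "m = n - 1"
  have nm: "n = m + 1" "n - 1 = m" using False m_def by auto
  have "real (g n n) = real (2*n choose n) - real (2*n choose m)"
    using g_closed[of n n] False nm(2) by (simp add: mult_2 of_nat_diff)
  also have "real (2*n choose n) = fact (2*n) / (fact n * fact (2*n - n))"
    by (rule binomial_fact) simp
  also have "2*n - n = n" by simp
  also have "real (2*n choose m) = fact (2*n) / (fact m * fact (2*n - m))"
    by (rule binomial_fact) (simp add: nm)
  also have "2*n - m = n + 1" using nm by simp
  also have "fact (2*n) / (fact n * fact n) - fact (2*n) / (fact m * fact (n+1))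
     = (fact (2*n) :: real) / (fact n * fact (n+1))"
  proof -
    have fn: "(fact n :: real) = real n * fact m" by (simp add: nm(1) del: of_nat_Suc)
    have fn1: "(fact (n+1) :: real) = (1 + real n) * fact n" by simp
    have pos: "(fact m :: real) > 0" "real n > 0" using False by auto
    show ?thesis unfolding fn1 unfolding fn using alg_cat[OF pos] by simp
  qed
  finally show ?thesis by (simp add: catalan_def)
qed


definition SSH :: "blk list \<Rightarrow> blk list" where "SSH w = [S,S] @ w @ [H]"

lemma half_ok: "dyck w \<Longrightarrow> half w = nS w"
  unfolding dyck_def half_def using len_nSH[of w] by simp

lemma D_eq: "{w. dyck w \<and> half w = n} = W n n"
  unfolding W_def using half_ok by (auto simp: dyck_def ok_def)

lemma card_D: "real (card {w. dyck w \<and> half w = n}) = catalan n"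
  by (simp add: D_eq card_W catalan_g)

lemma finite_D: "finite {w. dyck w \<and> half w = n}"
  by (simp add: D_eq finite_W)

lemma SSH_simps[simp]: "SSH w \<noteq> [H]" "SSH w \<noteq> [S,H,S]" "SSH w \<noteq> [S,H,H]"
  "drop 2 (butlast (SSH w)) = w" "won (SSH w)"
  by (auto simp: SSH_def won_def butlast_append)

lemma inj_SSH: "inj SSH" by (auto simp: inj_def SSH_def)

lemma L_SSH: "L (SSH w) = half w + 2" by (simp add: L_def)
lemma prob_SSH: "cyc_prob p q (SSH w) = q^2 * p * (p*q) ^ half w" by (simp add: cyc_prob_def)

lemma cycles_won: "{\<omega> \<in> attack_cycles. won \<omega> \<and> P \<omega>} =
   (if P [S,H,S] then {[S,H,S]} else {}) \<union> SSH ` {w. dyck w \<and> P (SSH w)}"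
  by (auto simp: attack_cycles_def won_def SSH_def)

lemma sum_SSH: "finite A \<Longrightarrow> (\<Sum>\<omega>\<in>SSH ` A. cyc_prob p q \<omega>) = (\<Sum>w\<in>A. q^2 * p * (p*q) ^ half w)"
  by (subst sum.reindex) (auto intro: inj_on_subset[OF inj_SSH] simp: prob_SSH)

lemma part1: "cyc_event_prob p q (\<lambda>\<omega>. won \<omega> \<and> L \<omega> = k) = pi_k p q k"
proof -
  have e: "{\<omega> \<in> attack_cycles. won \<omega> \<and> L \<omega> = k} =
     (if k = 2 then {[S,H,S]} else {}) \<union> SSH ` {w. dyck w \<and> half w + 2 = k}"
    using cycles_won[of "\<lambda>\<omega>. L \<omega> = k"] by (simp add: L_SSH L_def)
  show ?thesis
  proof (cases "k < 2")
    case True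
    then have E0: "{\<omega> \<in> attack_cycles. won \<omega> \<and> L \<omega> = k} = {}" unfolding e by auto
    show ?thesis unfolding cyc_event_prob_def E0 using True by (simp add: pi_k_def)
  next
    case False
    then have A: "{w. dyck w \<and> half w + 2 = k} = {w. dyck w \<and> half w = k - 2}" by auto
    have fin: "finite {w. dyck w \<and> half w = k - 2}" by (rule finite_D)
    have disj: "[S,H,S] \<notin> SSH ` {w. dyck w \<and> half w = k - 2}" by (metis SSH_simps(2) image_iff)
    have "cyc_event_prob p q (\<lambda>\<omega>. won \<omega> \<and> L \<omega> = k)
       = (if k = 2 then p * q^2 else 0) + (\<Sum>w\<in>{w. dyck w \<and> half w = k - 2}. q^2 * p * (p*q) ^ half w)"
    proof (cases "k = 2")
      case True
      show ?thesis unfolding cyc_event_prob_def e A using fin disj True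
        by (simp only: if_True Un_insert_left Un_empty_left infsum_finite finite_insert finite_imageI
            sum.insert) (simp add: sum_SSH cyc_prob_def[of p q "[S,H,S]"])
    next
      case False
      show ?thesis unfolding cyc_event_prob_def e A using fin disj False
        by (simp add: sum_SSH)
    qed
    also have "(\<Sum>w\<in>{w. dyck w \<and> half w = k - 2}. q^2 * p * (p*q) ^ half w)
       = (\<Sum>w\<in>{w. dyck w \<and> half w = k - 2}. q^2 * p * (p*q) ^ (k-2))"
      by (rule sum.cong) auto
    also have "\<dots> = q^2 * p * (p*q) ^ (k-2) * catalan (k-2)"
      using card_D[of "k-2"] by simp
    finally show ?thesis using False by (simp add: pi_k_def algebra_simps)
  qed
qed

lemma part2: "k \<ge> 2 \<Longrightarrow> cyc_event_prob p q (\<lambda>\<omega>. won \<omega> \<and> L \<omega> \<le> k)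
   = p * q^2 + p * q^2 * catalan_poly (k-2) (p*q)"
proof -
  assume k: "k \<ge> 2"
  define m where "m = k - 2"
  have e: "{\<omega> \<in> attack_cycles. won \<omega> \<and> L \<omega> \<le> k} =
     {[S,H,S]} \<union> SSH ` {w. dyck w \<and> half w \<le> m}"
    using cycles_won[of "\<lambda>\<omega>. L \<omega> \<le> k"] k by (auto simp: L_SSH L_def m_def)
  have U: "{w. dyck w \<and> half w \<le> m} = (\<Union>j\<in>{..m}. {w. dyck w \<and> half w = j})" by auto
  have fin: "finite {w. dyck w \<and> half w \<le> m}" unfolding U using finite_D by auto
  have disj: "[S,H,S] \<notin> SSH ` {w. dyck w \<and> half w \<le> m}" by (metis SSH_simps(2) image_iff)
  have "cyc_event_prob p q (\<lambda>\<omega>. won \<omega> \<and> L \<omega> \<le> k)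
       = p * q^2 + (\<Sum>w\<in>{w. dyck w \<and> half w \<le> m}. q^2 * p * (p*q) ^ half w)"
    unfolding cyc_event_prob_def e using fin disj
    by (simp add: sum_SSH cyc_prob_def[of p q "[S,H,S]"])
  also have "(\<Sum>w\<in>{w. dyck w \<and> half w \<le> m}. q^2 * p * (p*q) ^ half w)
      = (\<Sum>j\<in>{..m}. (\<Sum>w\<in>{w. dyck w \<and> half w = j}. q^2 * p * (p*q) ^ half w))"
    unfolding U by (rule sum.UNION_disjoint) (auto simp: finite_D)
  also have "\<dots> = (\<Sum>j\<in>{..m}. q^2 * p * ((p*q) ^ j * catalan j))"
  proof (rule sum.cong)
    fix j assume "j \<in> {..m}"
    have "(\<Sum>w\<in>{w. dyck w \<and> half w = j}. q^2 * p * (p*q) ^ half w)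
       = (\<Sum>w\<in>{w. dyck w \<and> half w = j}. q^2 * p * (p*q) ^ j)" by (rule sum.cong) auto
    also have "\<dots> = q^2 * p * ((p*q) ^ j * catalan j)" using card_D[of j] by simp
    finally show "(\<Sum>w\<in>{w. dyck w \<and> half w = j}. q^2 * p * (p*q) ^ half w) = q^2 * p * ((p*q) ^ j * catalan j)" .
  qed simp
  also have "\<dots> = p * q^2 * catalan_poly m (p*q)"
    by (simp add: catalan_poly_def sum_distrib_left atLeast0AtMost algebra_simps)
  finally show ?thesis by (simp add: m_def)
qed

theorem lemma1:
  fixes p q :: real
  assumes "p + q = 1" and "0 < q" and "q < p"
  shows "(\<forall>k::nat. cyc_event_prob p q (\<lambda>\<omega>. won \<omega> \<and> L \<omega> = k) = pi_k p q k)
       \<and> (\<forall>k::nat. k \<ge> 2 \<longrightarrow>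
            cyc_event_prob p q (\<lambda>\<omega>. won \<omega> \<and> L \<omega> \<le> k)
              = p * q^2 + p * q^2 * catalan_poly (k-2) (p*q))"
  using part1 part2 by blast
end
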